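(* Let $\mathcal S$ be a trajectory set satisfying (LOP) and (K). Then $\mathcal L^1_{(K)}$ is a vector space containing $\mathcal E$, and $\int_{(K)}:\mathcal L^1_{(K)}\to\mathbb R$ is a linear, positive, constant-preserving extension of $I$ which satisfies: if $f,f_n\in\mathcal L^1_{(K)}$ and $\lim_{n\to\infty}\|f_n-f\|=0$, then $\lim_{n\to\infty}\int_{(K)}f_n=\int_{(K)}f$. Moreover, $\int_{(K)}$ is strictly positive: if $f,g\in\mathcal L^1_{(K)}$ satisfy $f\ge g$ almost everywhere and $\int_{(K)}f=\int_{(K)}g$, then $f=g$ almost everywhere.
   Context: Fix $s_0\in\mathbb R$. A trajectory set is any set $\mathcal S$ of real sequences $S=(S_j)_{j\in\mathbb N_0}$ with $S_0=s_0$. A simple portfolio $(V,n,H)$ consists of $V\in\mathbb R$, $n\in\mathbb N$ and nonanticipating functions $H_i:\mathcal S\to\mathbb R$, $0\le i\le n-1$ (i.e. $H_i(S)=h_i(S_0,\dots,S_i)$ for some arbitrary $h_i:\mathbb R^{i+1}\to\mathbb R$). Its wealth is $\Pi^{V,n,H}_j(S)=V+\sum_{i=0}^{\min\{j,n\}-1}H_i(S)(S_{i+1}-S_i)$ and $\Pi^{V,n,H}_\infty:=\Pi^{V,n,H}_n$; it is positive if $V\ge0$ and $\Pi^{V,n,H}_\infty\ge0$ on $\mathcal S$. A generalized portfolio is a sequence $(V_m,n_m,H_m)_{m\in\mathbb N_0}$ of simple portfolios, positive for every $m\ge1$; it is a positive generalized portfolio if moreover $\Pi^{V_0,n_0,H_0}_j\equiv0$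 for all $j$. A map $f:\mathcal S\to[-\infty,+\infty]$ is superhedged with initial endowment $V=\sum_{m=0}^\infty V_m\in(-\infty,+\infty]$ by such a portfolio if $f\le\sum_{m=0}^\infty\Pi^{V_m,n_m,H_m}_\infty$ on $\mathcal S$. For $f\ge0$, $\bar I(f)$ is the infimum of initial endowments of positive generalized portfolios superhedging $f$; $\bar\sigma(f)$ is the infimum of initial endowments of generalized portfolios superhedging $f$. Let $\mathcal E=\{\Pi^{V,n,H}_\infty\}$ over all simple portfolios. (LOP): whenever two simple portfolios have equal terminal wealth $\Pi_\infty$ at every $S\in\mathcal S$, their initial endowments coincide; under (LOP), $I:\mathcal E\to\mathbb R$, $I(\Pi^{V,n,H}_\infty)=V$, is well defined and linear. (K): $I(f)+\bar I(f^-)\le\bar I(f^+)$ for every $f\in\mathcal E$. Define $\|f\|:=\bar I(|f|)$; null functions are $f$ with $\|f\|=0$, null sets are $A\subseteq\mathcal S$ with $\|\mathbf 1_A\|=0$, and "almost everywhere" means outside a null set. Let $\underline\sigma(f)=-\bar\sigma(-f)$, let $\mathcal L^1_{(K)}$ be the set of real-valued financial positions $f$ with $\underline\sigma(f)=\bar\sigma(f)\in\mathbb R$, and set $\int_{(K)}f:=\bar\sigma(f)$ for $f\in\mathcal L^1_{(K)}$. Positive means $f\ge0$ implies $\int_{(K)}f\ge0$; constant-preserving means $\int_{(K)}c=c$ for constants $c$. *)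

theory Defs
  imports "HOL-Analysis.Analysis"
begin

type_synonym traj = "nat \<Rightarrow> real"

text \<open>A simple portfolio (V, n, H): initial endowment V, horizon n, strategies H i.\<close>
type_synonym portfolio = "real \<times> nat \<times> (nat \<Rightarrow> traj \<Rightarrow> real)"

definition trajectory_set :: "real \<Rightarrow> traj set \<Rightarrow> bool" where
  "trajectory_set s0 \<S> \<longleftrightarrow> (\<forall>S\<in>\<S>. S 0 = s0)"

definition pV :: "portfolio \<Rightarrow> real" where "pV p = fst p"
definition pn :: "portfolio \<Rightarrow> nat" where "pn p = fst (snd p)"
definition pH :: "portfolio \<Rightarrow> nat \<Rightarrow> traj \<Rightarrow> real" where "pH p = snd (snd p)"

definition nonanticipating :: "traj set \<Rightarrow> nat \<Rightarrow> (nat \<Rightarrow> traj \<Rightarrow> real) \<Rightarrow> bool" where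
  "nonanticipating \<S> n H \<longleftrightarrow>
     (\<forall>i<n. \<exists>h :: traj \<Rightarrow> real. \<forall>S\<in>\<S>. H i S = h (\<lambda>k. if k \<le> i then S k else 0))"

definition simple_portfolio :: "traj set \<Rightarrow> portfolio \<Rightarrow> bool" where
  "simple_portfolio \<S> p \<longleftrightarrow> pn p \<ge> 1 \<and> nonanticipating \<S> (pn p) (pH p)"

definition wealth :: "portfolio \<Rightarrow> nat \<Rightarrow> traj \<Rightarrow> real" where
  "wealth p j S = pV p + (\<Sum>i<min j (pn p). pH p i S * (S (Suc i) - S i))"

definition terminal :: "portfolio \<Rightarrow> traj \<Rightarrow> real" where
  "terminal p S = wealth p (pn p) S"

definition positive_portfolio :: "traj set \<Rightarrow> portfolio \<Rightarrow> bool" where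
  "positive_portfolio \<S> p \<longleftrightarrow> pV p \<ge> 0 \<and> (\<forall>S\<in>\<S>. terminal p S \<ge> 0)"

definition gen_portfolio :: "traj set \<Rightarrow> (nat \<Rightarrow> portfolio) \<Rightarrow> bool" where
  "gen_portfolio \<S> P \<longleftrightarrow> (\<forall>m. simple_portfolio \<S> (P m)) \<and>
     (\<forall>m\<ge>1. positive_portfolio \<S> (P m))"

definition pos_gen_portfolio :: "traj set \<Rightarrow> (nat \<Rightarrow> portfolio) \<Rightarrow> bool" where
  "pos_gen_portfolio \<S> P \<longleftrightarrow> gen_portfolio \<S> P \<and> (\<forall>j. \<forall>S\<in>\<S>. wealth (P 0) j S = 0)"

text \<open>Initial endowment V = sum of V_m in (-inf, +inf] (terms m >= 1 are nonnegative).\<close>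
definition endowment :: "(nat \<Rightarrow> portfolio) \<Rightarrow> ereal" where
  "endowment P = ereal (pV (P 0)) + (\<Sum>m. ereal (pV (P (Suc m))))"

definition gen_terminal :: "(nat \<Rightarrow> portfolio) \<Rightarrow> traj \<Rightarrow> ereal" where
  "gen_terminal P S = ereal (terminal (P 0) S) + (\<Sum>m. ereal (terminal (P (Suc m)) S))"

definition superhedges :: "traj set \<Rightarrow> (traj \<Rightarrow> ereal) \<Rightarrow> (nat \<Rightarrow> portfolio) \<Rightarrow> bool" where
  "superhedges \<S> f P \<longleftrightarrow> (\<forall>S\<in>\<S>. f S \<le> gen_terminal P S)"

definition Ibar :: "traj set \<Rightarrow> (traj \<Rightarrow> ereal) \<Rightarrow> ereal" where
  "Ibar \<S> f = Inf {endowment P | P. pos_gen_portfolio \<S> P \<and> superhedges \<S> f P}"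

definition sigmabar :: "traj set \<Rightarrow> (traj \<Rightarrow> ereal) \<Rightarrow> ereal" where
  "sigmabar \<S> f = Inf {endowment P | P. gen_portfolio \<S> P \<and> superhedges \<S> f P}"

definition sigmaunder :: "traj set \<Rightarrow> (traj \<Rightarrow> ereal) \<Rightarrow> ereal" where
  "sigmaunder \<S> f = - sigmabar \<S> (\<lambda>S. - f S)"

definition in_E :: "traj set \<Rightarrow> (traj \<Rightarrow> real) \<Rightarrow> bool" where
  "in_E \<S> f \<longleftrightarrow> (\<exists>p. simple_portfolio \<S> p \<and> (\<forall>S\<in>\<S>. f S = terminal p S))"

definition LOP :: "traj set \<Rightarrow> bool" where
  "LOP \<S> \<longleftrightarrow> (\<forall>p q. simple_portfolio \<S> p \<and> simple_portfolio \<S> q \<and>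
      (\<forall>S\<in>\<S>. terminal p S = terminal q S) \<longrightarrow> pV p = pV q)"

definition Ifun :: "traj set \<Rightarrow> (traj \<Rightarrow> real) \<Rightarrow> real" where
  "Ifun \<S> f = (THE v. \<exists>p. simple_portfolio \<S> p \<and> (\<forall>S\<in>\<S>. f S = terminal p S) \<and> pV p = v)"

definition condK :: "traj set \<Rightarrow> bool" where
  "condK \<S> \<longleftrightarrow> (\<forall>f. in_E \<S> f \<longrightarrow>
     ereal (Ifun \<S> f) + Ibar \<S> (\<lambda>S. ereal (max (- f S) 0)) \<le> Ibar \<S> (\<lambda>S. ereal (max (f S) 0)))"

definition snorm :: "traj set \<Rightarrow> (traj \<Rightarrow> real) \<Rightarrow> ereal" where
  "snorm \<S> f = Ibar \<S> (\<lambda>S. ereal \<bar>f S\<bar>)"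

definition null_set :: "traj set \<Rightarrow> traj set \<Rightarrow> bool" where
  "null_set \<S> A \<longleftrightarrow> A \<subseteq> \<S> \<and> Ibar \<S> (\<lambda>S. ereal (indicator A S)) = 0"

definition ae :: "traj set \<Rightarrow> (traj \<Rightarrow> bool) \<Rightarrow> bool" where
  "ae \<S> P \<longleftrightarrow> (\<exists>A. null_set \<S> A \<and> (\<forall>S\<in>\<S> - A. P S))"

definition L1K :: "traj set \<Rightarrow> (traj \<Rightarrow> real) set" where
  "L1K \<S> = {f. sigmaunder \<S> (\<lambda>S. ereal (f S)) = sigmabar \<S> (\<lambda>S. ereal (f S))
               \<and> sigmabar \<S> (\<lambda>S. ereal (f S)) \<noteq> \<infinity> \<and> sigmabar \<S> (\<lambda>S. ereal (f S)) \<noteq> -\<infinity>}"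

definition intK :: "traj set \<Rightarrow> (traj \<Rightarrow> real) \<Rightarrow> real" where
  "intK \<S> f = real_of_ereal (sigmabar \<S> (\<lambda>S. ereal (f S)))"

end

theory Submission
  imports Defs "HOL-Analysis.Caratheodory"
begin

definition zp :: portfolio where "zp = (0, 1, \<lambda>i S. 0)"
definition cp :: "real \<Rightarrow> portfolio" where "cp c = (c, 1, \<lambda>i S. 0)"
definition addp :: "portfolio \<Rightarrow> portfolio \<Rightarrow> portfolio" where
  "addp p q = (pV p + pV q, max (pn p) (pn q),
     \<lambda>i S. (if i < pn p then pH p i S else 0) + (if i < pn q then pH q i S else 0))"
definition smul :: "real \<Rightarrow> portfolio \<Rightarrow> portfolio" where
  "smul c p = (c * pV p, pn p, \<lambda>i S. c * pH p i S)"

lemma pV_simps[simp]: "pV zp = 0" "pV (cp c) = c" "pV (addp p q) = pV p + pV q" "pV (smul c p) = c * pV p"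
  by (auto simp: pV_def zp_def cp_def addp_def smul_def)
lemma pn_simps[simp]: "pn zp = 1" "pn (cp c) = 1" "pn (addp p q) = max (pn p) (pn q)" "pn (smul c p) = pn p"
  by (auto simp: pn_def zp_def cp_def addp_def smul_def)
lemma pH_simps[simp]: "pH zp = (\<lambda>i S. 0)" "pH (cp c) = (\<lambda>i S. 0)"
  "pH (addp p q) = (\<lambda>i S. (if i < pn p then pH p i S else 0) + (if i < pn q then pH q i S else 0))"
  "pH (smul c p) = (\<lambda>i S. c * pH p i S)"
  by (auto simp: pH_def zp_def cp_def addp_def smul_def)

lemma sum_if_less: "(\<Sum>i<(K::nat). if i < n then a i else (0::real)) = (\<Sum>i<min K n. a i)"
  by (induct K) (auto simp: min_def)

lemma wealth_ge: "pn p \<le> j \<Longrightarrow> wealth p j S = terminal p S"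
  by (simp add: wealth_def terminal_def min_def)

lemma wealth_addp: "wealth (addp p q) j S = wealth p j S + wealth q j S"
proof -
  have "(\<Sum>i<min j (max (pn p) (pn q)). (if i < pn p then pH p i S else 0) * (S (Suc i) - S i)
     + (if i < pn q then pH q i S else 0) * (S (Suc i) - S i))
     = (\<Sum>i<min j (pn p). pH p i S * (S (Suc i) - S i)) + (\<Sum>i<min j (pn q). pH q i S * (S (Suc i) - S i))"
    apply (subst sum.distrib)
    apply (subst (1 2) if_distrib[where f="\<lambda>x. x * _"])
    apply (simp only: mult_zero_left sum_if_less)
    by (simp add: min_def max_def)
  then show ?thesis by (simp add: wealth_def algebra_simps)
qed

lemma terminal_addp: "terminal (addp p q) S = terminal p S + terminal q S"
proof -
  have "terminal (addp p q) S = wealth p (max (pn p) (pn q)) S + wealth q (max (pn p) (pn q)) S"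
    by (simp add: terminal_def wealth_addp)
  then show ?thesis by (simp add: wealth_ge)
qed

lemma wealth_smul: "wealth (smul c p) j S = c * wealth p j S"
  by (simp add: wealth_def sum_distrib_left algebra_simps)
lemma terminal_smul: "terminal (smul c p) S = c * terminal p S"
  by (simp add: terminal_def wealth_smul)
lemma wealth_zp[simp]: "wealth zp j S = 0" by (simp add: wealth_def)
lemma terminal_zp[simp]: "terminal zp S = 0" by (simp add: terminal_def)
lemma terminal_cp[simp]: "terminal (cp c) S = c" by (simp add: terminal_def wealth_def)

lemma simple_zp: "simple_portfolio \<S> zp"
  by (auto simp: simple_portfolio_def nonanticipating_def)
lemma simple_cp: "simple_portfolio \<S> (cp c)"
  by (auto simp: simple_portfolio_def nonanticipating_def)
lemma simple_addp: "simple_portfolio \<S> p \<Longrightarrow> simple_portfolio \<S> q \<Longrightarrow> simple_portfolio \<S> (addp p q)"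
proof -
  assume p: "simple_portfolio \<S> p" and q: "simple_portfolio \<S> q"
  have "\<exists>h. \<forall>S\<in>\<S>. (if i < pn p then pH p i S else 0) + (if i < pn q then pH q i S else 0)
           = h (\<lambda>k. if k \<le> i then S k else 0)" for i
  proof -
    obtain h1 where h1: "i < pn p \<Longrightarrow> \<forall>S\<in>\<S>. pH p i S = h1 (\<lambda>k. if k \<le> i then S k else 0)"
      using p unfolding simple_portfolio_def nonanticipating_def by blast
    obtain h2 where h2: "i < pn q \<Longrightarrow> \<forall>S\<in>\<S>. pH q i S = h2 (\<lambda>k. if k \<le> i then S k else 0)"
      using q unfolding simple_portfolio_def nonanticipating_def by blast
    show ?thesis
      by (rule exI[of _ "\<lambda>x. (if i < pn p then h1 x else 0) + (if i < pn q then h2 x else 0)"])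
         (use h1 h2 in auto)
  qed
  then show ?thesis using p q by (auto simp: simple_portfolio_def nonanticipating_def)
qed
lemma simple_smul: "simple_portfolio \<S> p \<Longrightarrow> simple_portfolio \<S> (smul c p)"
proof -
  assume p: "simple_portfolio \<S> p"
  have "\<exists>h. \<forall>S\<in>\<S>. c * pH p i S = h (\<lambda>k. if k \<le> i then S k else 0)" if i: "i < pn p" for i
  proof -
    obtain h1 where h1: "\<forall>S\<in>\<S>. pH p i S = h1 (\<lambda>k. if k \<le> i then S k else 0)"
      using p i unfolding simple_portfolio_def nonanticipating_def by blast
    show ?thesis by (rule exI[of _ "\<lambda>x. c * h1 x"]) (use h1 in auto)
  qed
  then show ?thesis using p by (auto simp: simple_portfolio_def nonanticipating_def)
qed

lemma positive_zp: "positive_portfolio \<S> zp"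
  by (simp add: positive_portfolio_def)
lemma positive_addp: "positive_portfolio \<S> p \<Longrightarrow> positive_portfolio \<S> q \<Longrightarrow> positive_portfolio \<S> (addp p q)"
  by (simp add: positive_portfolio_def terminal_addp)
lemma positive_smul: "0 \<le> c \<Longrightarrow> positive_portfolio \<S> p \<Longrightarrow> positive_portfolio \<S> (smul c p)"
  by (simp add: positive_portfolio_def terminal_smul)

lemma S_nonempty: "LOP \<S> \<Longrightarrow> \<S> \<noteq> {}"
  using simple_zp[of \<S>] simple_cp[of \<S> 1] unfolding LOP_def
  by (metis empty_iff pV_simps(1,2) zero_neq_one)

definition gadd :: "(nat \<Rightarrow> portfolio) \<Rightarrow> (nat \<Rightarrow> portfolio) \<Rightarrow> nat \<Rightarrow> portfolio" where
  "gadd P Q = (\<lambda>m. addp (P m) (Q m))"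
definition gsmul :: "real \<Rightarrow> (nat \<Rightarrow> portfolio) \<Rightarrow> nat \<Rightarrow> portfolio" where
  "gsmul c P = (\<lambda>m. smul c (P m))"
definition gsingle :: "portfolio \<Rightarrow> nat \<Rightarrow> portfolio" where
  "gsingle p = (\<lambda>m. if m = 0 then p else zp)"
definition gtail :: "(nat \<Rightarrow> portfolio) \<Rightarrow> nat \<Rightarrow> nat \<Rightarrow> portfolio" where
  "gtail P N = (\<lambda>m. if m = 0 then zp else P (m + N))"

lemma gen_pos: "gen_portfolio \<S> P \<Longrightarrow> 0 \<le> pV (P (Suc m))"
  by (auto simp: gen_portfolio_def positive_portfolio_def)
lemma gen_pos_term: "gen_portfolio \<S> P \<Longrightarrow> S \<in> \<S> \<Longrightarrow> 0 \<le> terminal (P (Suc m)) S"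
  by (auto simp: gen_portfolio_def positive_portfolio_def)
lemma gen_simple: "gen_portfolio \<S> P \<Longrightarrow> simple_portfolio \<S> (P m)"
  by (auto simp: gen_portfolio_def)

lemma pos_gen_term0: "pos_gen_portfolio \<S> P \<Longrightarrow> S \<in> \<S> \<Longrightarrow> terminal (P 0) S = 0"
  unfolding pos_gen_portfolio_def terminal_def by blast
lemma pos_gen_V0: "pos_gen_portfolio \<S> P \<Longrightarrow> \<S> \<noteq> {} \<Longrightarrow> pV (P 0) = 0"
  unfolding pos_gen_portfolio_def by (metis all_not_in_conv wealth_def lessThan_0 min_0L sum.empty add_0_right)

lemma gen_gadd: "gen_portfolio \<S> P \<Longrightarrow> gen_portfolio \<S> Q \<Longrightarrow> gen_portfolio \<S> (gadd P Q)"
  by (simp add: gen_portfolio_def gadd_def simple_addp positive_addp)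
lemma pos_gen_gadd: "pos_gen_portfolio \<S> P \<Longrightarrow> pos_gen_portfolio \<S> Q \<Longrightarrow> pos_gen_portfolio \<S> (gadd P Q)"
  using gen_gadd[of \<S> P Q] by (simp add: pos_gen_portfolio_def gadd_def wealth_addp)
lemma ereal_add4: "(ereal a + x) + (ereal b + y) = ereal (a+b) + (x + y)"
  by (cases x; cases y) auto

lemma endowment_gadd: "gen_portfolio \<S> P \<Longrightarrow> gen_portfolio \<S> Q \<Longrightarrow>
   endowment (gadd P Q) = endowment P + endowment Q"
proof -
  assume P: "gen_portfolio \<S> P" and Q: "gen_portfolio \<S> Q"
  have "(\<Sum>m. ereal (pV (gadd P Q (Suc m)))) = (\<Sum>m. ereal (pV (P (Suc m))) + ereal (pV (Q (Suc m))))"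
    by (simp add: gadd_def)
  also have "\<dots> = (\<Sum>m. ereal (pV (P (Suc m)))) + (\<Sum>m. ereal (pV (Q (Suc m))))"
    by (rule suminf_add_ereal) (use gen_pos[OF P] gen_pos[OF Q] in auto)
  finally have e: "(\<Sum>m. ereal (pV (gadd P Q (Suc m)))) = (\<Sum>m. ereal (pV (P (Suc m)))) + (\<Sum>m. ereal (pV (Q (Suc m))))" .
  have "endowment (gadd P Q) = ereal (pV (P 0) + pV (Q 0)) + (\<Sum>m. ereal (pV (gadd P Q (Suc m))))"
    by (simp add: endowment_def gadd_def)
  also have "\<dots> = endowment P + endowment Q" unfolding e endowment_def
    by (rule ereal_add4[symmetric])
  finally show ?thesis .
qed
lemma gen_terminal_gadd: "gen_portfolio \<S> P \<Longrightarrow> gen_portfolio \<S> Q \<Longrightarrow> S \<in> \<S> \<Longrightarrow>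
   gen_terminal (gadd P Q) S = gen_terminal P S + gen_terminal Q S"
proof -
  assume P: "gen_portfolio \<S> P" and Q: "gen_portfolio \<S> Q" and S: "S \<in> \<S>"
  have "(\<Sum>m. ereal (terminal (gadd P Q (Suc m)) S)) = (\<Sum>m. ereal (terminal (P (Suc m)) S) + ereal (terminal (Q (Suc m)) S))"
    by (simp add: gadd_def terminal_addp)
  also have "\<dots> = (\<Sum>m. ereal (terminal (P (Suc m)) S)) + (\<Sum>m. ereal (terminal (Q (Suc m)) S))"
    by (rule suminf_add_ereal) (use gen_pos_term[OF P S] gen_pos_term[OF Q S] in auto)
  finally have e: "(\<Sum>m. ereal (terminal (gadd P Q (Suc m)) S)) = (\<Sum>m. ereal (terminal (P (Suc m)) S)) + (\<Sum>m. ereal (terminal (Q (Suc m)) S))" .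
  have "gen_terminal (gadd P Q) S = ereal (terminal (P 0) S + terminal (Q 0) S) + (\<Sum>m. ereal (terminal (gadd P Q (Suc m)) S))"
    by (simp add: gen_terminal_def gadd_def terminal_addp)
  also have "\<dots> = gen_terminal P S + gen_terminal Q S" unfolding e gen_terminal_def
    by (rule ereal_add4[symmetric])
  finally show ?thesis .
qed

lemma ereal_cmult_helper: "0 \<le> c \<Longrightarrow> ereal c * (ereal a + s) = ereal (c*a) + ereal c * s"
proof (cases s)
  case (real r) then show ?thesis by (simp add: distrib_left)
next
  case PInf
  assume "0 \<le> c" then show ?thesis using PInf by (cases "c = 0") auto
next
  case MInf
  assume "0 \<le> c" then show ?thesis using MInf by (cases "c = 0") auto
qed

lemma gen_gsmul: "0 \<le> c \<Longrightarrow> gen_portfolio \<S> P \<Longrightarrow> gen_portfolio \<S> (gsmul c P)"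
  by (simp add: gen_portfolio_def gsmul_def simple_smul positive_smul)
lemma pos_gen_gsmul: "0 \<le> c \<Longrightarrow> pos_gen_portfolio \<S> P \<Longrightarrow> pos_gen_portfolio \<S> (gsmul c P)"
  using gen_gsmul[of c \<S> P] by (simp add: pos_gen_portfolio_def gsmul_def wealth_smul)
lemma endowment_gsmul: "0 \<le> c \<Longrightarrow> gen_portfolio \<S> P \<Longrightarrow>
   endowment (gsmul c P) = ereal c * endowment P"
proof -
  assume c: "0 \<le> c" and P: "gen_portfolio \<S> P"
  have "(\<Sum>m. ereal (pV (gsmul c P (Suc m)))) = (\<Sum>m. ereal c * ereal (pV (P (Suc m))))"
    by (simp add: gsmul_def)
  also have "\<dots> = ereal c * (\<Sum>m. ereal (pV (P (Suc m))))"
    by (rule suminf_cmult_ereal) (use gen_pos[OF P] c in auto)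
  finally have e: "(\<Sum>m. ereal (pV (gsmul c P (Suc m)))) = ereal c * (\<Sum>m. ereal (pV (P (Suc m))))" .
  have "endowment (gsmul c P) = ereal (c * pV (P 0)) + (\<Sum>m. ereal (pV (gsmul c P (Suc m))))"
    by (simp add: endowment_def gsmul_def)
  also have "\<dots> = ereal c * endowment P" unfolding e endowment_def
    by (rule ereal_cmult_helper[OF c, symmetric])
  finally show ?thesis .
qed
lemma gen_terminal_gsmul: "0 \<le> c \<Longrightarrow> gen_portfolio \<S> P \<Longrightarrow> S \<in> \<S> \<Longrightarrow>
   gen_terminal (gsmul c P) S = ereal c * gen_terminal P S"
proof -
  assume c: "0 \<le> c" and P: "gen_portfolio \<S> P" and S: "S \<in> \<S>"
  have "(\<Sum>m. ereal (terminal (gsmul c P (Suc m)) S)) = (\<Sum>m. ereal c * ereal (terminal (P (Suc m)) S))"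
    by (simp add: gsmul_def terminal_smul)
  also have "\<dots> = ereal c * (\<Sum>m. ereal (terminal (P (Suc m)) S))"
    by (rule suminf_cmult_ereal) (use gen_pos_term[OF P S] c in auto)
  finally have e: "(\<Sum>m. ereal (terminal (gsmul c P (Suc m)) S)) = ereal c * (\<Sum>m. ereal (terminal (P (Suc m)) S))" .
  have "gen_terminal (gsmul c P) S = ereal (c * terminal (P 0) S) + (\<Sum>m. ereal (terminal (gsmul c P (Suc m)) S))"
    by (simp add: gen_terminal_def gsmul_def terminal_smul)
  also have "\<dots> = ereal c * gen_terminal P S" unfolding e gen_terminal_def
    by (rule ereal_cmult_helper[OF c, symmetric])
  finally show ?thesis .
qed

lemma gen_gsingle: "simple_portfolio \<S> p \<Longrightarrow> gen_portfolio \<S> (gsingle p)"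
  by (simp add: gen_portfolio_def gsingle_def simple_zp positive_zp)
lemma endowment_gsingle: "endowment (gsingle p) = pV p"
  by (simp add: endowment_def gsingle_def zero_ereal_def[symmetric])
lemma gen_terminal_gsingle: "gen_terminal (gsingle p) S = terminal p S"
  by (simp add: gen_terminal_def gsingle_def zero_ereal_def[symmetric])

lemma pos_gen_gtail: "gen_portfolio \<S> P \<Longrightarrow> pos_gen_portfolio \<S> (gtail P N)"
  by (auto simp: pos_gen_portfolio_def gen_portfolio_def gtail_def simple_zp positive_zp)
lemma endowment_gtail: "endowment (gtail P N) = (\<Sum>m. ereal (pV (P (Suc (m + N)))))"
  by (simp add: endowment_def gtail_def)
lemma gen_terminal_gtail: "gen_terminal (gtail P N) S = (\<Sum>m. ereal (terminal (P (Suc (m + N))) S))"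
  by (simp add: gen_terminal_def gtail_def)

lemma endowment_split: "gen_portfolio \<S> P \<Longrightarrow> endowment P = ereal (pV (P 0)) + (\<Sum>m. ereal (pV (P (Suc m)))) \<and> 0 \<le> (\<Sum>m. ereal (pV (P (Suc m))))"
  by (auto simp: endowment_def intro!: suminf_0_le gen_pos)

lemma endowment_not_minf: "gen_portfolio \<S> P \<Longrightarrow> endowment P \<noteq> -\<infinity>"
proof -
  assume P: "gen_portfolio \<S> P"
  then have "0 \<le> (\<Sum>m. ereal (pV (P (Suc m))))" using endowment_split by blast
  then show ?thesis by (auto simp: endowment_def)
qed

lemma ereal_minus_le_helper: "z \<le> a + ereal r \<Longrightarrow> z - ereal r \<le> (a::ereal)"
  by (cases z; cases a) auto

lemma Inf_add_ge:
  fixes A B :: "ereal set"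
  assumes h: "\<And>a b. a \<in> A \<Longrightarrow> b \<in> B \<Longrightarrow> z \<le> a + b"
  shows "z \<le> Inf A + Inf B"
proof -
  have step1: "z \<le> Inf A + b" if b: "b \<in> B" for b
  proof (cases b)
    case (real r)
    have "z - ereal r \<le> Inf A"
      by (rule Inf_greatest) (use h b real in \<open>auto intro: ereal_minus_le_helper\<close>)
    then show ?thesis using real by (cases z; cases "Inf A") auto
  next
    case PInf then show ?thesis by simp
  next
    case MInf
    have "z \<le> a + b" if "a \<in> A" for a using h b that by auto
    then show ?thesis
    proof (cases "\<exists>a\<in>A. a \<noteq> \<infinity>")
      case False
      then have "Inf A = \<infinity>" by (auto intro: Inf_eqI)
      then show ?thesis by simp
    next
      case True
      then obtain a where "a \<in> A" "a \<noteq> \<infinity>" by auto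
      then have "z \<le> a + b" using h b by auto
      then have "z = -\<infinity>" using MInf \<open>a \<noteq> \<infinity>\<close> by (cases a) auto
      then show ?thesis by simp
    qed
  qed
  show ?thesis
  proof (cases "Inf A")
    case (real r)
    have "z - ereal r \<le> Inf B"
      by (rule Inf_greatest) (use step1 real in \<open>auto intro: ereal_minus_le_helper simp: add.commute\<close>)
    then show ?thesis using real by (cases z; cases "Inf B") auto
  next
    case PInf then show ?thesis by simp
  next
    case MInf
    show ?thesis
    proof (cases "\<exists>b\<in>B. b \<noteq> \<infinity>")
      case True
      then obtain b where b: "b \<in> B" "b \<noteq> \<infinity>" by auto
      have "z \<le> Inf A + b" using step1 b by auto
      then have "z = -\<infinity>" using MInf b by (cases b) auto
      then show ?thesis by simp
    next
      case False
      then have "Inf B = \<infinity>" by (auto intro: Inf_eqI)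
      then show ?thesis using MInf by simp
    qed
  qed
qed

definition hinf :: "((nat \<Rightarrow> portfolio) \<Rightarrow> bool) \<Rightarrow> traj set \<Rightarrow> (traj \<Rightarrow> ereal) \<Rightarrow> ereal" where
  "hinf Qp \<S> F = Inf {endowment P | P. Qp P \<and> superhedges \<S> F P}"

lemma sigmabar_hinf: "sigmabar \<S> = hinf (gen_portfolio \<S>) \<S>"
  by (simp add: fun_eq_iff sigmabar_def hinf_def)
lemma Ibar_hinf: "Ibar \<S> = hinf (pos_gen_portfolio \<S>) \<S>"
  by (simp add: fun_eq_iff Ibar_def hinf_def)

lemma hinf_le: "Qp P \<Longrightarrow> superhedges \<S> F P \<Longrightarrow> hinf Qp \<S> F \<le> endowment P"
  unfolding hinf_def by (rule Inf_lower) blast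

lemma hinf_mono: "(\<And>S. S \<in> \<S> \<Longrightarrow> F S \<le> G S) \<Longrightarrow> hinf Qp \<S> F \<le> hinf Qp \<S> G"
  unfolding hinf_def superhedges_def
  by (rule Inf_superset_mono) (auto intro: order_trans)

lemma hinf_greatest: "(\<And>P. Qp P \<Longrightarrow> superhedges \<S> F P \<Longrightarrow> z \<le> endowment P) \<Longrightarrow> z \<le> hinf Qp \<S> F"
  unfolding hinf_def by (rule Inf_greatest) blast

lemma hinf_add:
  assumes cl: "\<And>P Q. Qp P \<Longrightarrow> Qp Q \<Longrightarrow> Qp (gadd P Q)"
    and gen: "\<And>P. Qp P \<Longrightarrow> gen_portfolio \<S> P"
  shows "hinf Qp \<S> (\<lambda>S. F S + G S) \<le> hinf Qp \<S> F + hinf Qp \<S> G"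
  unfolding hinf_def[of Qp \<S> F] hinf_def[of Qp \<S> G]
proof (rule Inf_add_ge)
  fix a b assume a: "a \<in> {endowment P |P. Qp P \<and> superhedges \<S> F P}"
    and b: "b \<in> {endowment P |P. Qp P \<and> superhedges \<S> G P}"
  then obtain P Q where P: "Qp P" "superhedges \<S> F P" "a = endowment P"
    and Q: "Qp Q" "superhedges \<S> G Q" "b = endowment Q" by auto
  have "superhedges \<S> (\<lambda>S. F S + G S) (gadd P Q)"
    using P Q gen[OF P(1)] gen[OF Q(1)] by (auto simp: superhedges_def gen_terminal_gadd intro: add_mono)
  then have "hinf Qp \<S> (\<lambda>S. F S + G S) \<le> endowment (gadd P Q)"
    by (rule hinf_le[where Qp=Qp, OF cl[OF P(1) Q(1)]])
  then show "hinf Qp \<S> (\<lambda>S. F S + G S) \<le> a + b"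
    using P Q endowment_gadd[OF gen[OF P(1)] gen[OF Q(1)]] by simp
qed

lemma sigmabar_add: "sigmabar \<S> (\<lambda>S. F S + G S) \<le> sigmabar \<S> F + sigmabar \<S> G"
  unfolding sigmabar_hinf by (rule hinf_add) (auto intro: gen_gadd)
lemma Ibar_add: "Ibar \<S> (\<lambda>S. F S + G S) \<le> Ibar \<S> F + Ibar \<S> G"
  unfolding Ibar_hinf
proof (rule hinf_add)
  show "pos_gen_portfolio \<S> (gadd P Q)" if "pos_gen_portfolio \<S> P" "pos_gen_portfolio \<S> Q" for P Q
    using pos_gen_gadd that .
  show "gen_portfolio \<S> P" if "pos_gen_portfolio \<S> P" for P
    using that by (simp add: pos_gen_portfolio_def)
qed

lemma sigmabar_le: "gen_portfolio \<S> P \<Longrightarrow> superhedges \<S> F P \<Longrightarrow> sigmabar \<S> F \<le> endowment P"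
  unfolding sigmabar_def by (rule Inf_lower) blast
lemma Ibar_le: "pos_gen_portfolio \<S> P \<Longrightarrow> superhedges \<S> F P \<Longrightarrow> Ibar \<S> F \<le> endowment P"
  unfolding Ibar_def by (rule Inf_lower) blast
lemma sigmabar_greatest: "(\<And>P. gen_portfolio \<S> P \<Longrightarrow> superhedges \<S> F P \<Longrightarrow> z \<le> endowment P) \<Longrightarrow> z \<le> sigmabar \<S> F"
  unfolding sigmabar_def by (rule Inf_greatest) blast
lemma Ibar_greatest: "(\<And>P. pos_gen_portfolio \<S> P \<Longrightarrow> superhedges \<S> F P \<Longrightarrow> z \<le> endowment P) \<Longrightarrow> z \<le> Ibar \<S> F"
  unfolding Ibar_def by (rule Inf_greatest) blast

lemma sigmabar_le_Ibar: "sigmabar \<S> F \<le> Ibar \<S> F"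
  unfolding sigmabar_def Ibar_def pos_gen_portfolio_def
  by (rule Inf_superset_mono) blast

lemma sigmabar_mono: "(\<And>S. S \<in> \<S> \<Longrightarrow> F S \<le> G S) \<Longrightarrow> sigmabar \<S> F \<le> sigmabar \<S> G"
  unfolding sigmabar_hinf by (rule hinf_mono)
lemma Ibar_mono: "(\<And>S. S \<in> \<S> \<Longrightarrow> F S \<le> G S) \<Longrightarrow> Ibar \<S> F \<le> Ibar \<S> G"
  unfolding Ibar_hinf by (rule hinf_mono)

lemma Ibar_nonneg: "LOP \<S> \<Longrightarrow> 0 \<le> Ibar \<S> F"
proof (rule Ibar_greatest)
  fix P assume L: "LOP \<S>" and P: "pos_gen_portfolio \<S> P"
  then have "pV (P 0) = 0" using pos_gen_V0 S_nonempty by blast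
  moreover have "gen_portfolio \<S> P" using P by (simp add: pos_gen_portfolio_def)
  ultimately show "0 \<le> endowment P" using endowment_split by (metis add_0 zero_ereal_def)
qed

lemma ereal_inv_mult: "0 < c \<Longrightarrow> ereal (1/c) * (ereal c * x) = x"
proof -
  assume c: "0 < c"
  have "ereal (1/c) * (ereal c * x) = (ereal (1/c) * ereal c) * x" by (rule mult.assoc[symmetric])
  also have "ereal (1/c) * ereal c = 1" using c by (simp add: one_ereal_def)
  finally show ?thesis by simp
qed

lemma sigmabar_cmult_le:
  assumes c: "0 < c"
  shows "sigmabar \<S> (\<lambda>S. ereal c * F S) \<le> ereal c * sigmabar \<S> F"
proof -
  let ?z = "sigmabar \<S> (\<lambda>S. ereal c * F S)"
  have "ereal (1/c) * ?z \<le> sigmabar \<S> F"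
  proof (rule sigmabar_greatest)
    fix P assume P: "gen_portfolio \<S> P" "superhedges \<S> F P"
    have hs: "superhedges \<S> (\<lambda>S. ereal c * F S) (gsmul c P)"
      using P c by (auto simp: superhedges_def gen_terminal_gsmul intro: ereal_mult_left_mono)
    have g: "gen_portfolio \<S> (gsmul c P)" using c P by (simp add: gen_gsmul)
    have "?z \<le> endowment (gsmul c P)"
      using g hs by (rule sigmabar_le)
    also have "\<dots> = ereal c * endowment P" using c P by (simp add: endowment_gsmul)
    finally have "ereal (1/c) * ?z \<le> ereal (1/c) * (ereal c * endowment P)"
      using c by (intro ereal_mult_left_mono) auto
    then show "ereal (1/c) * ?z \<le> endowment P" using c by (simp add: ereal_inv_mult)
  qed
  then have "ereal c * (ereal (1/c) * ?z) \<le> ereal c * sigmabar \<S> F"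
    using c by (intro ereal_mult_left_mono) auto
  moreover have "ereal c * (ereal (1/c) * ?z) = ?z"
    using c by (metis ereal_inv_mult mult.assoc mult.commute times_ereal.simps(1))
  ultimately show ?thesis by simp
qed

lemma sigmabar_cmult:
  assumes c: "0 < c"
  shows "sigmabar \<S> (\<lambda>S. ereal c * F S) = ereal c * sigmabar \<S> F"
proof (rule antisym)
  show "sigmabar \<S> (\<lambda>S. ereal c * F S) \<le> ereal c * sigmabar \<S> F" by (rule sigmabar_cmult_le[OF c])
  have "sigmabar \<S> (\<lambda>S. ereal (1/c) * (ereal c * F S)) \<le> ereal (1/c) * sigmabar \<S> (\<lambda>S. ereal c * F S)"
    by (rule sigmabar_cmult_le) (use c in auto)
  then have "sigmabar \<S> F \<le> ereal (1/c) * sigmabar \<S> (\<lambda>S. ereal c * F S)"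
    using c by (simp add: ereal_inv_mult)
  then have "ereal c * sigmabar \<S> F \<le> ereal c * (ereal (1/c) * sigmabar \<S> (\<lambda>S. ereal c * F S))"
    using c by (intro ereal_mult_left_mono) auto
  also have "\<dots> = sigmabar \<S> (\<lambda>S. ereal c * F S)"
    using c by (metis ereal_inv_mult mult.assoc mult.commute times_ereal.simps(1))
  finally show "ereal c * sigmabar \<S> F \<le> sigmabar \<S> (\<lambda>S. ereal c * F S)" .
qed

lemma Ifun_eq:
  assumes L: "LOP \<S>" and p: "simple_portfolio \<S> p" and f: "\<And>S. S \<in> \<S> \<Longrightarrow> f S = terminal p S"
  shows "Ifun \<S> f = pV p"
  unfolding Ifun_def
proof (rule the_equality)
  show "\<exists>p'. simple_portfolio \<S> p' \<and> (\<forall>S\<in>\<S>. f S = terminal p' S) \<and> pV p' = pV p"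
    using p f by blast
next
  fix v assume "\<exists>p'. simple_portfolio \<S> p' \<and> (\<forall>S\<in>\<S>. f S = terminal p' S) \<and> pV p' = v"
  then obtain p' where "simple_portfolio \<S> p'" "\<forall>S\<in>\<S>. f S = terminal p' S" "pV p' = v" by blast
  then show "v = pV p" using L p f unfolding LOP_def by metis
qed

lemma in_E_terminal: "simple_portfolio \<S> p \<Longrightarrow> in_E \<S> (\<lambda>S. terminal p S)"
  unfolding in_E_def by blast

lemma ereal_le_of_add_nonneg: "a + b \<le> (c::ereal) \<Longrightarrow> 0 \<le> b \<Longrightarrow> a \<le> c"
  by (metis add_increasing2 order_trans order_refl)

lemma lower_bound:
  assumes L: "LOP \<S>" and K: "condK \<S>" and P: "gen_portfolio \<S> P"
    and sh: "superhedges \<S> (\<lambda>S. ereal (terminal p S)) P" and p: "simple_portfolio \<S> p"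
  shows "ereal (pV p) \<le> endowment P"
proof -
  define q where "q = addp p (smul (-1) (P 0))"
  have q: "simple_portfolio \<S> q" unfolding q_def using p gen_simple[OF P] by (intro simple_addp simple_smul)
  have tq: "terminal q S = terminal p S - terminal (P 0) S" for S
    by (simp add: q_def terminal_addp terminal_smul)
  have Iq: "Ifun \<S> (\<lambda>S. terminal q S) = pV p - pV (P 0)"
    using Ifun_eq[OF L q, of "\<lambda>S. terminal q S"] by (simp add: q_def)
  have Kq: "ereal (Ifun \<S> (\<lambda>S. terminal q S)) + Ibar \<S> (\<lambda>S. ereal (max (- terminal q S) 0))
      \<le> Ibar \<S> (\<lambda>S. ereal (max (terminal q S) 0))"
    using K in_E_terminal[OF q] unfolding condK_def by blast
  have a: "ereal (Ifun \<S> (\<lambda>S. terminal q S)) \<le> Ibar \<S> (\<lambda>S. ereal (max (terminal q S) 0))"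
    using Kq Ibar_nonneg[OF L] by (rule ereal_le_of_add_nonneg)
  have "Ibar \<S> (\<lambda>S. ereal (max (terminal q S) 0)) \<le> endowment (gtail P 0)"
  proof (rule Ibar_le[OF pos_gen_gtail[OF P]])
    show "superhedges \<S> (\<lambda>S. ereal (max (terminal q S) 0)) (gtail P 0)"
      unfolding superhedges_def
    proof
      fix S assume S: "S \<in> \<S>"
      have nn: "0 \<le> (\<Sum>m. ereal (terminal (P (Suc m)) S))"
        by (rule suminf_0_le) (use gen_pos_term[OF P S] in auto)
      have "ereal (terminal p S) \<le> ereal (terminal (P 0) S) + (\<Sum>m. ereal (terminal (P (Suc m)) S))"
        using sh S by (auto simp: superhedges_def gen_terminal_def)
      then have "ereal (terminal q S) \<le> (\<Sum>m. ereal (terminal (P (Suc m)) S))"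
        unfolding tq using nn by (cases "\<Sum>m. ereal (terminal (P (Suc m)) S)") auto
      then show "ereal (max (terminal q S) 0) \<le> gen_terminal (gtail P 0) S"
        using nn by (simp add: gen_terminal_gtail zero_ereal_def[symmetric])
    qed
  qed
  also have "endowment (gtail P 0) = (\<Sum>m. ereal (pV (P (Suc m))))"
    by (simp add: endowment_gtail)
  finally have "ereal (pV p - pV (P 0)) \<le> (\<Sum>m. ereal (pV (P (Suc m))))"
    using a Iq by simp
  then show ?thesis unfolding endowment_def
    by (cases "\<Sum>m. ereal (pV (P (Suc m)))") auto
qed

lemma sigmabar_E:
  assumes L: "LOP \<S>" and K: "condK \<S>" and p: "simple_portfolio \<S> p"
    and f: "\<And>S. S \<in> \<S> \<Longrightarrow> f S = terminal p S"
  shows "sigmabar \<S> (\<lambda>S. ereal (f S)) = ereal (pV p)"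
proof (rule antisym)
  show "sigmabar \<S> (\<lambda>S. ereal (f S)) \<le> ereal (pV p)"
    using sigmabar_le[OF gen_gsingle[OF p], of "\<lambda>S. ereal (f S)"] f
    by (simp add: superhedges_def gen_terminal_gsingle endowment_gsingle)
  show "ereal (pV p) \<le> sigmabar \<S> (\<lambda>S. ereal (f S))"
  proof (rule sigmabar_greatest)
    fix P assume "gen_portfolio \<S> P" "superhedges \<S> (\<lambda>S. ereal (f S)) P"
    moreover have "superhedges \<S> (\<lambda>S. ereal (terminal p S)) P \<longleftrightarrow> superhedges \<S> (\<lambda>S. ereal (f S)) P"
      using f by (simp add: superhedges_def)
    ultimately show "ereal (pV p) \<le> endowment P" using lower_bound[OF L K _ _ p] by blast
  qed
qed

lemma suminf_ereal_offset:
  fixes f :: "nat \<Rightarrow> ereal"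
  assumes nn: "\<And>i. 0 \<le> f i"
  shows "suminf f = (\<Sum>j. f (j + i)) + (\<Sum>j<i. f j)"
proof -
  let ?l = "\<Sum>j. f (j + i)"
  have "(\<lambda>j. f (j + i)) sums ?l" by (rule summable_sums[OF summable_ereal_pos]) (use nn in auto)
  then have t: "(\<lambda>k. \<Sum>n<k. f (n + i)) \<longlonglongrightarrow> ?l" by (simp add: sums_def)
  have l0: "0 \<le> ?l" by (rule suminf_0_le) (use nn in auto)
  have c0: "0 \<le> (\<Sum>j<i. f j)" by (rule sum_nonneg) (use nn in auto)
  have "(\<lambda>k. (\<Sum>n<k. f (n + i)) + (\<Sum>j<i. f j)) \<longlonglongrightarrow> ?l + (\<Sum>j<i. f j)"
    by (rule tendsto_add_ereal_nonneg) (use l0 c0 t in auto)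
  moreover have "(\<Sum>j<k + i. f j) = (\<Sum>n<k. f (n + i)) + (\<Sum>j<i. f j)" for k :: nat
  proof -
    have "(\<Sum>j<k + i. f j) = (\<Sum>j=i..<k + i. f j) + (\<Sum>j=0..<i. f j)"
      by (subst sum.union_disjoint[symmetric]) (auto intro!: sum.cong)
    also have "(\<Sum>j=i..<k + i. f j) = (\<Sum>j\<in>(\<lambda>n. n + i)`{0..<k}. f j)"
      unfolding image_add_atLeastLessThan by simp
    finally show ?thesis
      by (auto simp: inj_on_def atLeast0LessThan sum.reindex)
  qed
  ultimately have "(\<lambda>k. (\<Sum>n<k + i. f n)) \<longlonglongrightarrow> ?l + (\<Sum>j<i. f j)"
    by simp
  then have "f sums (?l + (\<Sum>j<i. f j))"
    unfolding sums_def by (rule LIMSEQ_offset)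
  then show ?thesis by (rule sums_unique[symmetric])
qed

lemma suminf_ereal_2dimen:
  fixes a :: "nat \<times> nat \<Rightarrow> ereal"
  assumes nn: "\<And>x. 0 \<le> a x"
  shows "(\<Sum>i. a (prod_decode i)) = (\<Sum>k. \<Sum>m. a (k, m))"
proof -
  define b where "b x = e2ennreal (a x)" for x
  have ab: "a x = enn2ereal (b x)" for x
    using nn[of x] by (simp add: b_def enn2ereal_e2ennreal)
  have "(\<Sum>i. a (prod_decode i)) = enn2ereal (\<Sum>i. b (prod_decode i))"
    unfolding ab by simp
  also have "(\<Sum>i. b (prod_decode i)) = (\<Sum>k. \<Sum>m. b (k, m))"
    by (rule suminf_ennreal_2dimen) simp
  also have "enn2ereal (\<Sum>k. \<Sum>m. b (k, m)) = (\<Sum>k. \<Sum>m. a (k, m))"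
    unfolding ab by simp
  finally show ?thesis .
qed

lemma half_series_ereal: "(\<Sum>k. ereal (e * (1/2)^Suc k)) = ereal e"
proof -
  have "(\<lambda>k. e * (1/2::real)^Suc k) sums (e * 1)"
    by (rule sums_mult) (rule power_half_series)
  then show ?thesis by (simp add: sums_suminf_ereal)
qed

definition combQ :: "(nat \<Rightarrow> nat \<Rightarrow> portfolio) \<Rightarrow> nat \<Rightarrow> portfolio" where
  "combQ P = (\<lambda>n. if n = 0 then zp else (case prod_decode (n - 1) of (k, m) \<Rightarrow> P k (Suc m)))"

lemma combQ_Suc: "combQ P (Suc n) = P (fst (prod_decode n)) (Suc (snd (prod_decode n)))"
  by (simp add: combQ_def split: prod.split)

lemma combQ_0: "combQ P 0 = zp" by (simp add: combQ_def)

lemma pos_gen_combQ: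
  assumes P: "\<And>k. pos_gen_portfolio \<S> (P k)"
  shows "pos_gen_portfolio \<S> (combQ P)"
proof -
  have a: "simple_portfolio \<S> (combQ P m)" for m
    using P by (cases m) (auto simp: combQ_Suc simple_zp pos_gen_portfolio_def gen_portfolio_def combQ_0)
  have b: "1 \<le> m \<Longrightarrow> positive_portfolio \<S> (combQ P m)" for m
    using P by (cases m) (auto simp: combQ_Suc pos_gen_portfolio_def gen_portfolio_def)
  have c: "wealth (combQ P 0) j S = 0" for j S by (simp add: combQ_0)
  show ?thesis unfolding pos_gen_portfolio_def gen_portfolio_def using a b c by blast
qed

lemma endowment_pos_gen: "LOP \<S> \<Longrightarrow> pos_gen_portfolio \<S> P \<Longrightarrow> endowment P = (\<Sum>m. ereal (pV (P (Suc m))))"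
  using pos_gen_V0 S_nonempty by (simp add: endowment_def zero_ereal_def[symmetric])

lemma gen_terminal_pos_gen: "pos_gen_portfolio \<S> P \<Longrightarrow> S \<in> \<S> \<Longrightarrow> gen_terminal P S = (\<Sum>m. ereal (terminal (P (Suc m)) S))"
  using pos_gen_term0 by (simp add: gen_terminal_def zero_ereal_def[symmetric])

lemma Ibar_countable_sub:
  assumes L: "LOP \<S>" and nn: "\<And>k S. 0 \<le> F k S"
  shows "Ibar \<S> (\<lambda>S. \<Sum>k. F k S) \<le> (\<Sum>k. Ibar \<S> (F k))"
proof (cases "(\<Sum>k. Ibar \<S> (F k)) = \<infinity>")
  case True then show ?thesis by simp
next
  case False
  have I0: "0 \<le> Ibar \<S> (F k)" for k using Ibar_nonneg[OF L] .
  have Ifin: "Ibar \<S> (F k) \<noteq> \<infinity>" for k using suminf_PInfty[OF I0 False] .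
  show ?thesis
  proof (rule ereal_le_epsilon2)
    fix e :: real assume e: "0 < e"
    have "\<exists>P. pos_gen_portfolio \<S> P \<and> superhedges \<S> (F k) P \<and> endowment P < Ibar \<S> (F k) + ereal (e * (1/2)^Suc k)" for k
    proof -
      have "Ibar \<S> (F k) < Ibar \<S> (F k) + ereal (e * (1/2)^Suc k)"
        using I0[of k] Ifin[of k] e by (cases "Ibar \<S> (F k)") auto
      then show ?thesis unfolding Ibar_def[of \<S> "F k"] Inf_less_iff by blast
    qed
    then obtain P where P: "\<And>k. pos_gen_portfolio \<S> (P k)" "\<And>k. superhedges \<S> (F k) (P k)"
      "\<And>k. endowment (P k) < Ibar \<S> (F k) + ereal (e * (1/2)^Suc k)"
      by metis
    have PV: "0 \<le> pV (P k (Suc m))" for k m using P(1)[of k] gen_pos[of \<S> "P k" m] by (simp add: pos_gen_portfolio_def)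
    have PT: "S \<in> \<S> \<Longrightarrow> 0 \<le> terminal (P k (Suc m)) S" for k m S using P(1)[of k] gen_pos_term[of \<S> "P k" S m] by (simp add: pos_gen_portfolio_def)
    have Q: "pos_gen_portfolio \<S> (combQ P)" by (rule pos_gen_combQ[OF P(1)])
    have "endowment (combQ P) = (\<Sum>n. ereal (pV (combQ P (Suc n))))"
      by (rule endowment_pos_gen[OF L Q])
    also have "\<dots> = (\<Sum>n. (\<lambda>x. ereal (pV (P (fst x) (Suc (snd x))))) (prod_decode n))"
      by (simp add: combQ_Suc)
    also have "\<dots> = (\<Sum>k. \<Sum>m. ereal (pV (P k (Suc m))))"
      by (subst suminf_ereal_2dimen) (auto simp: PV)
    also have "\<dots> = (\<Sum>k. endowment (P k))"
      using endowment_pos_gen[OF L P(1)] by simp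
    also have "\<dots> \<le> (\<Sum>k. Ibar \<S> (F k) + ereal (e * (1/2)^Suc k))"
      by (rule suminf_le_pos) (use P(3) endowment_pos_gen[OF L P(1)] PV in \<open>auto intro: less_imp_le suminf_0_le\<close>)
    also have "\<dots> = (\<Sum>k. Ibar \<S> (F k)) + (\<Sum>k. ereal (e * (1/2)^Suc k))"
      by (rule suminf_add_ereal) (use I0 e in auto)
    also have "\<dots> = (\<Sum>k. Ibar \<S> (F k)) + ereal e"
      by (simp only: half_series_ereal)
    finally have eQ: "endowment (combQ P) \<le> (\<Sum>k. Ibar \<S> (F k)) + ereal e" .
    have "superhedges \<S> (\<lambda>S. \<Sum>k. F k S) (combQ P)"
      unfolding superhedges_def
    proof
      fix S assume S: "S \<in> \<S>"
      have "gen_terminal (combQ P) S = (\<Sum>n. ereal (terminal (combQ P (Suc n)) S))"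
        by (rule gen_terminal_pos_gen[OF Q S])
      also have "\<dots> = (\<Sum>n. (\<lambda>x. ereal (terminal (P (fst x) (Suc (snd x))) S)) (prod_decode n))"
        by (simp add: combQ_Suc)
      also have "\<dots> = (\<Sum>k. \<Sum>m. ereal (terminal (P k (Suc m)) S))"
        by (subst suminf_ereal_2dimen) (auto simp: PT S)
      also have "\<dots> = (\<Sum>k. gen_terminal (P k) S)"
        using gen_terminal_pos_gen[OF P(1) S] by simp
      finally have gt: "gen_terminal (combQ P) S = (\<Sum>k. gen_terminal (P k) S)" .
      show "(\<Sum>k. F k S) \<le> gen_terminal (combQ P) S"
        unfolding gt by (rule suminf_le_pos) (use P(2) S nn in \<open>auto simp: superhedges_def\<close>)
    qed
    then have "Ibar \<S> (\<lambda>S. \<Sum>k. F k S) \<le> endowment (combQ P)" by (rule Ibar_le[OF Q])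
    then show "Ibar \<S> (\<lambda>S. \<Sum>k. F k S) \<le> (\<Sum>k. Ibar \<S> (F k)) + ereal e" using eQ by simp
  qed
qed

primrec psum :: "(nat \<Rightarrow> portfolio) \<Rightarrow> nat \<Rightarrow> portfolio" where
  "psum P 0 = P 0"
| "psum P (Suc n) = addp (psum P n) (P (Suc n))"

lemma psum_simple: "gen_portfolio \<S> P \<Longrightarrow> simple_portfolio \<S> (psum P n)"
  by (induct n) (auto intro: simple_addp gen_simple)
lemma psum_pV: "pV (psum P n) = pV (P 0) + (\<Sum>m<n. pV (P (Suc m)))"
  by (induct n) auto
lemma psum_terminal: "terminal (psum P n) S = terminal (P 0) S + (\<Sum>m<n. terminal (P (Suc m)) S)"
  by (induct n) (auto simp: terminal_addp)

lemma ereal_add3: "ereal a + x + ereal b = ereal (a + b) + x"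
  by (cases x) auto

lemma Ibar_gen_terminal_le:
  assumes L: "LOP \<S>" and K: "condK \<S>" and P: "gen_portfolio \<S> P"
    and nn: "\<And>S. S \<in> \<S> \<Longrightarrow> 0 \<le> gen_terminal P S" and fin: "endowment P \<noteq> \<infinity>"
  shows "Ibar \<S> (gen_terminal P) \<le> endowment P"
proof -
  define V where "V = (\<lambda>m. pV (P (Suc m)))"
  have V0: "0 \<le> V m" for m using gen_pos[OF P] by (simp add: V_def)
  have sfin: "(\<Sum>m. ereal (V m)) \<noteq> \<infinity>" using fin by (simp add: endowment_def V_def)
  have sV: "summable V" by (rule summable_ereal[OF V0 sfin])
  have endo: "endowment P = ereal (pV (P 0) + suminf V)"
    using suminf_ereal'[OF sV] by (simp add: endowment_def V_def)
  show ?thesis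
  proof (rule ereal_le_epsilon2)
    fix e :: real assume e: "0 < e"
    obtain N where N: "norm (\<Sum>i. V (i + N)) < e"
      using suminf_exist_split[OF e sV] by blast
    define t where "t = (\<Sum>i. V (i + N))"
    have t0: "0 \<le> t" unfolding t_def by (rule suminf_nonneg) (use sV V0 in auto)
    have te: "t < e" using N t0 by (simp add: t_def)
    define k where "k = psum P N"
    have k: "simple_portfolio \<S> k" unfolding k_def by (rule psum_simple[OF P])
    define R where "R = gtail P N"
    have R: "pos_gen_portfolio \<S> R" unfolding R_def by (rule pos_gen_gtail[OF P])
    have endoR: "endowment R = ereal t"
      unfolding R_def endowment_gtail t_def
      using suminf_ereal'[OF summable_ignore_initial_segment[OF sV, of N]] by (simp add: V_def)
    have kt: "pV k + t = pV (P 0) + suminf V"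
      unfolding k_def psum_pV t_def using suminf_split_initial_segment[OF sV, of N] by (simp add: V_def)
    have GR0: "0 \<le> gen_terminal R S" if S: "S \<in> \<S>" for S
      unfolding R_def gen_terminal_gtail by (rule suminf_0_le) (use gen_pos_term[OF P S] in auto)
    have split: "gen_terminal P S = ereal (terminal k S) + gen_terminal R S" if S: "S \<in> \<S>" for S
    proof -
      have "(\<Sum>m. ereal (terminal (P (Suc m)) S)) = (\<Sum>j. ereal (terminal (P (Suc (j + N))) S)) + (\<Sum>j<N. ereal (terminal (P (Suc j)) S))"
        using suminf_ereal_offset[of "\<lambda>m. ereal (terminal (P (Suc m)) S)" N] gen_pos_term[OF P S] by simp
      then show ?thesis
        unfolding R_def gen_terminal_gtail unfolding gen_terminal_def k_def psum_terminal
        by (simp add: add.assoc[symmetric] ereal_add3)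
    qed
    have a: "Ibar \<S> (\<lambda>S. ereal (max (- terminal k S) 0)) \<le> ereal t"
    proof -
      have "Ibar \<S> (\<lambda>S. ereal (max (- terminal k S) 0)) \<le> endowment R"
      proof (rule Ibar_le[OF R])
        show "superhedges \<S> (\<lambda>S. ereal (max (- terminal k S) 0)) R"
          unfolding superhedges_def
        proof
          fix S assume S: "S \<in> \<S>"
          have "0 \<le> ereal (terminal k S) + gen_terminal R S" using nn[OF S] split[OF S] by simp
          then show "ereal (max (- terminal k S) 0) \<le> gen_terminal R S"
            using GR0[OF S] by (cases "gen_terminal R S") auto
        qed
      qed
      then show ?thesis using endoR by simp
    qed
    define mk where "mk = smul (-1) k"
    have mk: "simple_portfolio \<S> mk" unfolding mk_def by (rule simple_smul[OF k])
    have tmk: "terminal mk S = - terminal k S" for S by (simp add: mk_def terminal_smul)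
    have "ereal (Ifun \<S> (\<lambda>S. terminal mk S)) + Ibar \<S> (\<lambda>S. ereal (max (- terminal mk S) 0))
      \<le> Ibar \<S> (\<lambda>S. ereal (max (terminal mk S) 0))"
      using K in_E_terminal[OF mk] unfolding condK_def by blast
    moreover have "Ifun \<S> (\<lambda>S. terminal mk S) = - pV k"
      using Ifun_eq[OF L mk, of "\<lambda>S. terminal mk S"] by (simp add: mk_def)
    ultimately have b0: "ereal (- pV k) + Ibar \<S> (\<lambda>S. ereal (max (terminal k S) 0)) \<le> ereal t"
      using a unfolding tmk by simp
    have b: "Ibar \<S> (\<lambda>S. ereal (max (terminal k S) 0)) \<le> ereal (pV k + t)"
      using b0 Ibar_nonneg[OF L, of "\<lambda>S. ereal (max (terminal k S) 0)"]
      by (cases "Ibar \<S> (\<lambda>S. ereal (max (terminal k S) 0))") auto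
    have "Ibar \<S> (gen_terminal P) \<le> Ibar \<S> (\<lambda>S. ereal (max (terminal k S) 0) + gen_terminal R S)"
    proof (rule Ibar_mono)
      fix S assume S: "S \<in> \<S>"
      show "gen_terminal P S \<le> ereal (max (terminal k S) 0) + gen_terminal R S"
        unfolding split[OF S] by (rule add_right_mono) simp
    qed
    also have "\<dots> \<le> Ibar \<S> (\<lambda>S. ereal (max (terminal k S) 0)) + Ibar \<S> (gen_terminal R)"
      by (rule Ibar_add)
    also have "Ibar \<S> (gen_terminal R) \<le> ereal t"
      using Ibar_le[OF R, of "gen_terminal R"] endoR by (simp add: superhedges_def)
    then have "Ibar \<S> (\<lambda>S. ereal (max (terminal k S) 0)) + Ibar \<S> (gen_terminal R) \<le> ereal (pV k + t) + ereal t"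
      using b by (rule add_mono[rotated])
    also have "\<dots> \<le> endowment P + ereal e"
      using kt te endo by simp
    finally show "Ibar \<S> (gen_terminal P) \<le> endowment P + ereal e" .
  qed
qed

lemma L1K_char: "f \<in> L1K \<S> \<longleftrightarrow>
   (\<exists>a. sigmabar \<S> (\<lambda>S. ereal (f S)) = ereal a \<and> sigmabar \<S> (\<lambda>S. ereal (- f S)) = ereal (- a))"
proof -
  have e: "(\<lambda>S. - ereal (f S)) = (\<lambda>S. ereal (- f S))" by simp
  show ?thesis
    unfolding L1K_def sigmaunder_def e mem_Collect_eq
    by (cases "sigmabar \<S> (\<lambda>S. ereal (f S))"; cases "sigmabar \<S> (\<lambda>S. ereal (- f S))") auto
qed

lemma intK_eq: "sigmabar \<S> (\<lambda>S. ereal (f S)) = ereal a \<Longrightarrow> intK \<S> f = a"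
  by (simp add: intK_def)

lemma sigmabar_const:
  assumes L: "LOP \<S>" and K: "condK \<S>"
  shows "sigmabar \<S> (\<lambda>S. ereal c) = ereal c"
  using sigmabar_E[OF L K simple_cp, of "\<lambda>S. c" c] by simp

lemma sigmabar_zero:
  assumes L: "LOP \<S>" and K: "condK \<S>"
  shows "sigmabar \<S> (\<lambda>S. 0) = 0"
  using sigmabar_const[OF L K, of 0] by (simp add: zero_ereal_def)

lemma E_L1K:
  assumes L: "LOP \<S>" and K: "condK \<S>" and f: "in_E \<S> f"
  shows "f \<in> L1K \<S> \<and> intK \<S> f = Ifun \<S> f"
proof -
  obtain p where p: "simple_portfolio \<S> p" "\<And>S. S \<in> \<S> \<Longrightarrow> f S = terminal p S"
    using f unfolding in_E_def by blast
  have s1: "sigmabar \<S> (\<lambda>S. ereal (f S)) = ereal (pV p)" by (rule sigmabar_E[OF L K p])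
  have "sigmabar \<S> (\<lambda>S. ereal (- f S)) = ereal (pV (smul (-1) p))"
    by (rule sigmabar_E[OF L K simple_smul[OF p(1)]]) (simp add: terminal_smul p(2))
  then have s2: "sigmabar \<S> (\<lambda>S. ereal (- f S)) = ereal (- pV p)" by simp
  show ?thesis using s1 s2 intK_eq[OF s1] Ifun_eq[OF L p] unfolding L1K_char by auto
qed

lemma ereal_squeeze:
  fixes X Y :: ereal
  assumes "X \<le> ereal c" "Y \<le> ereal (- c)" "0 \<le> X + Y"
  shows "X = ereal c \<and> Y = ereal (- c)"
  using assms by (cases X; cases Y) auto

lemma L1K_add:
  assumes L: "LOP \<S>" and K: "condK \<S>"
    and f: "sigmabar \<S> (\<lambda>S. ereal (f S)) = ereal a" "sigmabar \<S> (\<lambda>S. ereal (- f S)) = ereal (- a)"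
    and g: "sigmabar \<S> (\<lambda>S. ereal (g S)) = ereal b" "sigmabar \<S> (\<lambda>S. ereal (- g S)) = ereal (- b)"
  shows "sigmabar \<S> (\<lambda>S. ereal (f S + g S)) = ereal (a + b) \<and> sigmabar \<S> (\<lambda>S. ereal (- (f S + g S))) = ereal (- (a + b))"
proof (rule ereal_squeeze)
  show "sigmabar \<S> (\<lambda>S. ereal (f S + g S)) \<le> ereal (a + b)"
    using sigmabar_add[of \<S> "\<lambda>S. ereal (f S)" "\<lambda>S. ereal (g S)"] f g by simp
  show "sigmabar \<S> (\<lambda>S. ereal (- (f S + g S))) \<le> ereal (- (a + b))"
    using sigmabar_add[of \<S> "\<lambda>S. ereal (- f S)" "\<lambda>S. ereal (- g S)"] f g by simp
  have "sigmabar \<S> (\<lambda>S. ereal (f S + g S) + ereal (- (f S + g S))) \<le>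
      sigmabar \<S> (\<lambda>S. ereal (f S + g S)) + sigmabar \<S> (\<lambda>S. ereal (- (f S + g S)))"
    by (rule sigmabar_add)
  then show "0 \<le> sigmabar \<S> (\<lambda>S. ereal (f S + g S)) + sigmabar \<S> (\<lambda>S. ereal (- (f S + g S)))"
    using sigmabar_zero[OF L K] by (simp add: zero_ereal_def)
qed

lemma L1K_cmult:
  assumes L: "LOP \<S>" and K: "condK \<S>"
    and f: "sigmabar \<S> (\<lambda>S. ereal (f S)) = ereal a" "sigmabar \<S> (\<lambda>S. ereal (- f S)) = ereal (- a)"
  shows "sigmabar \<S> (\<lambda>S. ereal (c * f S)) = ereal (c * a) \<and> sigmabar \<S> (\<lambda>S. ereal (- (c * f S))) = ereal (- (c * a))"
proof (cases "0 < c")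
  case True
  have "sigmabar \<S> (\<lambda>S. ereal c * ereal (f S)) = ereal c * ereal a"
    using sigmabar_cmult[OF True, of \<S> "\<lambda>S. ereal (f S)"] f by simp
  moreover have "sigmabar \<S> (\<lambda>S. ereal c * ereal (- f S)) = ereal c * ereal (- a)"
    using sigmabar_cmult[OF True, of \<S> "\<lambda>S. ereal (- f S)"] f by simp
  ultimately show ?thesis by simp
next
  case False
  show ?thesis
  proof (cases "c = 0")
    case True then show ?thesis using sigmabar_zero[OF L K] by (simp add: zero_ereal_def)
  next
    case False
    then have c: "0 < - c" using \<open>\<not> 0 < c\<close> by simp
    have "sigmabar \<S> (\<lambda>S. ereal (- c) * ereal (- f S)) = ereal (- c) * ereal (- a)"
      using sigmabar_cmult[OF c, of \<S> "\<lambda>S. ereal (- f S)"] f by simp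
    moreover have "sigmabar \<S> (\<lambda>S. ereal (- c) * ereal (f S)) = ereal (- c) * ereal a"
      using sigmabar_cmult[OF c, of \<S> "\<lambda>S. ereal (f S)"] f by simp
    ultimately show ?thesis by simp
  qed
qed

lemma L1K_conv:
  assumes f: "sigmabar \<S> (\<lambda>S. ereal (f S)) = ereal a"
    and fs: "\<And>n. sigmabar \<S> (\<lambda>S. ereal (fs n S)) = ereal (b n)"
    and lim: "(\<lambda>n. snorm \<S> (\<lambda>S. fs n S - f S)) \<longlonglongrightarrow> 0"
  shows "b \<longlonglongrightarrow> a"
proof -
  define s where "s n = snorm \<S> (\<lambda>S. fs n S - f S)" for n
  have up: "ereal (b n) \<le> ereal a + s n" for n
  proof -
    have "ereal (b n) = sigmabar \<S> (\<lambda>S. ereal (f S) + ereal (fs n S - f S))"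
      using fs[of n] by simp
    also have "\<dots> \<le> sigmabar \<S> (\<lambda>S. ereal (f S)) + sigmabar \<S> (\<lambda>S. ereal (fs n S - f S))"
      by (rule sigmabar_add)
    also have "sigmabar \<S> (\<lambda>S. ereal (fs n S - f S)) \<le> sigmabar \<S> (\<lambda>S. ereal \<bar>fs n S - f S\<bar>)"
      by (rule sigmabar_mono) simp
    also have "\<dots> \<le> s n" unfolding s_def snorm_def by (rule sigmabar_le_Ibar)
    finally show ?thesis using f by (simp add: add_left_mono)
  qed
  have down: "ereal a \<le> ereal (b n) + s n" for n
  proof -
    have "ereal a = sigmabar \<S> (\<lambda>S. ereal (fs n S) + ereal (f S - fs n S))"
      using f by simp
    also have "\<dots> \<le> sigmabar \<S> (\<lambda>S. ereal (fs n S)) + sigmabar \<S> (\<lambda>S. ereal (f S - fs n S))"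
      by (rule sigmabar_add)
    also have "sigmabar \<S> (\<lambda>S. ereal (f S - fs n S)) \<le> sigmabar \<S> (\<lambda>S. ereal \<bar>fs n S - f S\<bar>)"
      by (rule sigmabar_mono) simp
    also have "\<dots> \<le> s n" unfolding s_def snorm_def by (rule sigmabar_le_Ibar)
    finally show ?thesis using fs[of n] by (simp add: add_left_mono)
  qed
  have lim': "s \<longlonglongrightarrow> 0" using lim by (simp add: s_def[abs_def])
  show ?thesis
  proof (rule order_tendstoI)
    fix y assume y: "y < a"
    have "\<forall>\<^sub>F n in sequentially. s n < ereal (a - y)"
      using order_tendstoD(2)[OF lim', of "ereal (a - y)"] y by (simp add: zero_ereal_def)
    then show "\<forall>\<^sub>F n in sequentially. y < b n"
    proof (rule eventually_mono)
      fix n assume "s n < ereal (a - y)"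
      then show "y < b n" using down[of n] by (cases "s n") auto
    qed
  next
    fix y assume y: "a < y"
    have "\<forall>\<^sub>F n in sequentially. s n < ereal (y - a)"
      using order_tendstoD(2)[OF lim', of "ereal (y - a)"] y by (simp add: zero_ereal_def)
    then show "\<forall>\<^sub>F n in sequentially. b n < y"
    proof (rule eventually_mono)
      fix n assume "s n < ereal (y - a)"
      then show "b n < y" using up[of n] by (cases "s n") auto
    qed
  qed
qed

lemma suminf_const_pos_ereal: "0 < (c::ereal) \<Longrightarrow> (\<Sum>k. c) = \<infinity>"
proof (cases c)
  case (real r)
  assume c: "0 < c"
  show ?thesis
  proof (rule ccontr)
    assume "(\<Sum>k. c) \<noteq> \<infinity>"
    then have "summable (\<lambda>k. r)" using real c by (intro summable_ereal) auto
    then have "(\<lambda>k. r) \<longlonglongrightarrow> 0" by (rule summable_LIMSEQ_zero)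
    then have "r = 0" by (simp add: LIMSEQ_const_iff)
    then show False using real c by simp
  qed
qed auto

lemma gen_terminal_not_minf: "gen_portfolio \<S> P \<Longrightarrow> S \<in> \<S> \<Longrightarrow> gen_terminal P S \<noteq> -\<infinity>"
proof -
  assume P: "gen_portfolio \<S> P" and S: "S \<in> \<S>"
  have "0 \<le> (\<Sum>m. ereal (terminal (P (Suc m)) S))"
    by (rule suminf_0_le) (use gen_pos_term[OF P S] in auto)
  then show ?thesis by (auto simp: gen_terminal_def)
qed

lemma gen_terminal_nonneg_pos: "pos_gen_portfolio \<S> P \<Longrightarrow> S \<in> \<S> \<Longrightarrow> 0 \<le> gen_terminal P S"
  using gen_terminal_pos_gen[of \<S> P S] gen_pos_term[of \<S> P S]
  by (auto simp: pos_gen_portfolio_def intro: suminf_0_le)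

lemma strict_pos:
  assumes L: "LOP \<S>" and K: "condK \<S>"
    and h: "sigmabar \<S> (\<lambda>S. ereal (h S)) = 0"
    and A: "null_set \<S> A" and hA: "\<And>S. S \<in> \<S> - A \<Longrightarrow> 0 \<le> h S"
  shows "null_set \<S> ({S\<in>\<S>. h S \<noteq> 0} \<union> A)"
proof -
  have AS: "A \<subseteq> \<S>" and IA: "Ibar \<S> (\<lambda>S. ereal (indicator A S)) = 0"
    using A by (auto simp: null_set_def)
  define u where "u S = (\<Sum>k::nat. ereal (indicator A S))" for S
  have uA: "u S = \<infinity>" if "S \<in> A" for S
    using that suminf_const_pos_ereal[of "1::ereal"] by (simp add: u_def one_ereal_def)
  have uN: "u S = 0" if "S \<notin> A" for S
    using that by (simp add: u_def zero_ereal_def[symmetric])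
  have u0: "0 \<le> u S" for S by (cases "S \<in> A") (simp_all add: uA uN)
  have Iu: "Ibar \<S> u \<le> 0"
  proof -
    have "Ibar \<S> u \<le> (\<Sum>k::nat. Ibar \<S> (\<lambda>S. ereal (indicator A S)))"
      unfolding u_def by (rule Ibar_countable_sub[OF L]) simp
    then show ?thesis using IA by simp
  qed
  define w where "w S = ereal (max (h S) 0) + u S" for S
  have w0: "0 \<le> w S" for S unfolding w_def using u0[of S] by (intro add_nonneg_nonneg) (simp_all add: zero_ereal_def[symmetric] le_max_iff_disj)
  have Iw: "Ibar \<S> w \<le> 0"
  proof (rule ereal_le_epsilon2)
    fix e :: real assume e: "0 < e"
    have "sigmabar \<S> (\<lambda>S. ereal (h S)) < ereal (e/2)" using h e by simp
    then obtain P where P: "gen_portfolio \<S> P" "superhedges \<S> (\<lambda>S. ereal (h S)) P" "endowment P < ereal (e/2)"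
      unfolding sigmabar_def Inf_less_iff by blast
    have "Ibar \<S> u < ereal (e/2)" using Iu e by (simp add: le_less_trans)
    then obtain Q where Q: "pos_gen_portfolio \<S> Q" "superhedges \<S> u Q" "endowment Q < ereal (e/2)"
      unfolding Ibar_def Inf_less_iff by blast
    have Qg: "gen_portfolio \<S> Q" using Q(1) by (simp add: pos_gen_portfolio_def)
    define P' where "P' = gadd P Q"
    have P': "gen_portfolio \<S> P'" unfolding P'_def by (rule gen_gadd[OF P(1) Qg])
    have eP': "endowment P' \<le> ereal e"
    proof -
      have "endowment P' = endowment P + endowment Q" unfolding P'_def by (rule endowment_gadd[OF P(1) Qg])
      also have "\<dots> \<le> ereal (e/2) + ereal (e/2)" using P(3) Q(3) by (intro add_mono) auto
      finally show ?thesis by simp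
    qed
    have key: "0 \<le> gen_terminal P' S \<and> w S \<le> gen_terminal P' S" if S: "S \<in> \<S>" for S
    proof -
      have gt: "gen_terminal P' S = gen_terminal P S + gen_terminal Q S"
        unfolding P'_def by (rule gen_terminal_gadd[OF P(1) Qg S])
      have GP: "ereal (h S) \<le> gen_terminal P S" using P(2) S by (simp add: superhedges_def)
      have GQ: "u S \<le> gen_terminal Q S" using Q(2) S by (simp add: superhedges_def)
      have GQ0: "0 \<le> gen_terminal Q S" by (rule gen_terminal_nonneg_pos[OF Q(1) S])
      show ?thesis
      proof (cases "S \<in> A")
        case True
        then have "gen_terminal Q S = \<infinity>" using GQ uA by simp
        then have "gen_terminal P' S = \<infinity>" using gt by simp
        then show ?thesis by simp
      next
        case False
        then have h0: "0 \<le> h S" using hA S by simp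
        have "w S = ereal (h S)" using False h0 by (simp add: w_def uN)
        also have "\<dots> \<le> gen_terminal P S + gen_terminal Q S" using GP GQ0 by (metis add_mono add_0_right)
        finally show ?thesis using gt h0 GP GQ0 by (metis add_mono add_0_right ereal_less_eq(5) order_trans)
      qed
    qed
    have "Ibar \<S> w \<le> Ibar \<S> (gen_terminal P')" by (rule Ibar_mono) (use key in auto)
    also have "\<dots> \<le> endowment P'"
      by (rule Ibar_gen_terminal_le[OF L K P']) (use key eP' in auto)
    also have "\<dots> \<le> 0 + ereal e" using eP' by simp
    finally show "Ibar \<S> w \<le> 0 + ereal e" .
  qed
  have Iw0: "Ibar \<S> w = 0" using Iw Ibar_nonneg[OF L, of w] by simp
  define N where "N = {S\<in>\<S>. h S \<noteq> 0} \<union> A"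
  have NS: "N \<subseteq> \<S>" using AS by (auto simp: N_def)
  have "Ibar \<S> (\<lambda>S. ereal (indicator N S)) \<le> Ibar \<S> (\<lambda>S. \<Sum>k::nat. w S)"
  proof (rule Ibar_mono)
    fix S assume S: "S \<in> \<S>"
    show "ereal (indicator N S) \<le> (\<Sum>k::nat. w S)"
    proof (cases "S \<in> N")
      case False
      then show ?thesis using suminf_0_le[of "\<lambda>k. w S"] w0 by (simp add: zero_ereal_def[symmetric])
    next
      case True
      have "0 < w S"
      proof (cases "S \<in> A")
        case True then show ?thesis by (simp add: w_def uA)
      next
        case False
        then have "h S \<noteq> 0" "0 \<le> h S" using \<open>S \<in> N\<close> S hA by (auto simp: N_def)
        then show ?thesis using False by (simp add: w_def uN)
      qed
      then show ?thesis using suminf_const_pos_ereal[of "w S"] by simp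
    qed
  qed
  also have "\<dots> \<le> (\<Sum>k::nat. Ibar \<S> w)" by (rule Ibar_countable_sub[OF L]) (rule w0)
  also have "\<dots> = 0" using Iw0 by simp
  finally have "Ibar \<S> (\<lambda>S. ereal (indicator N S)) = 0"
    using Ibar_nonneg[OF L, of "\<lambda>S. ereal (indicator N S)"] by simp
  then show ?thesis using NS unfolding null_set_def N_def by simp
qed

theorem theorem4p3:
  fixes s0 :: real and \<S> :: "traj set"
  assumes traj: "trajectory_set s0 \<S>"
    and lop: "LOP \<S>"
    and K: "condK \<S>"
  shows
    "(\<lambda>S. 0) \<in> L1K \<S>
     \<and> (\<forall>f\<in>L1K \<S>. \<forall>g\<in>L1K \<S>. (\<lambda>S. f S + g S) \<in> L1K \<S>)
     \<and> (\<forall>f\<in>L1K \<S>. \<forall>c::real. (\<lambda>S. c * f S) \<in> L1K \<S>)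
     \<and> (\<forall>f. in_E \<S> f \<longrightarrow> f \<in> L1K \<S>)
     \<and> (\<forall>f\<in>L1K \<S>. \<forall>g\<in>L1K \<S>. intK \<S> (\<lambda>S. f S + g S) = intK \<S> f + intK \<S> g)
     \<and> (\<forall>f\<in>L1K \<S>. \<forall>c::real. intK \<S> (\<lambda>S. c * f S) = c * intK \<S> f)
     \<and> (\<forall>f\<in>L1K \<S>. (\<forall>S\<in>\<S>. f S \<ge> 0) \<longrightarrow> intK \<S> f \<ge> 0)
     \<and> (\<forall>c::real. intK \<S> (\<lambda>S. c) = c)
     \<and> (\<forall>f. in_E \<S> f \<longrightarrow> intK \<S> f = Ifun \<S> f)
     \<and> (\<forall>f (fs :: nat \<Rightarrow> traj \<Rightarrow> real). f \<in> L1K \<S> \<longrightarrow> (\<forall>n. fs n \<in> L1K \<S>) \<longrightarrow>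
          (\<lambda>n. snorm \<S> (\<lambda>S. fs n S - f S)) \<longlonglongrightarrow> 0 \<longrightarrow>
          (\<lambda>n. intK \<S> (fs n)) \<longlonglongrightarrow> intK \<S> f)
     \<and> (\<forall>f\<in>L1K \<S>. \<forall>g\<in>L1K \<S>. ae \<S> (\<lambda>S. f S \<ge> g S) \<longrightarrow> intK \<S> f = intK \<S> g \<longrightarrow>
          ae \<S> (\<lambda>S. f S = g S))"

proof -
  note L = lop
  have cE: "in_E \<S> (\<lambda>S. c)" for c
    using in_E_terminal[OF simple_cp, of \<S> c] by simp
  have part1: "(\<lambda>S. 0) \<in> L1K \<S>" using E_L1K[OF L K cE[of 0]] by simp
  have part2: "\<forall>f\<in>L1K \<S>. \<forall>g\<in>L1K \<S>. (\<lambda>S. f S + g S) \<in> L1K \<S> \<and> intK \<S> (\<lambda>S. f S + g S) = intK \<S> f + intK \<S> g"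
  proof (intro ballI)
    fix f g assume "f \<in> L1K \<S>" "g \<in> L1K \<S>"
    then obtain a b where f: "sigmabar \<S> (\<lambda>S. ereal (f S)) = ereal a" "sigmabar \<S> (\<lambda>S. ereal (- f S)) = ereal (- a)"
      and g: "sigmabar \<S> (\<lambda>S. ereal (g S)) = ereal b" "sigmabar \<S> (\<lambda>S. ereal (- g S)) = ereal (- b)"
      unfolding L1K_char by blast
    have s: "sigmabar \<S> (\<lambda>S. ereal (f S + g S)) = ereal (a + b) \<and> sigmabar \<S> (\<lambda>S. ereal (- (f S + g S))) = ereal (- (a + b))"
      by (rule L1K_add[OF L K f g])
    show "(\<lambda>S. f S + g S) \<in> L1K \<S> \<and> intK \<S> (\<lambda>S. f S + g S) = intK \<S> f + intK \<S> g"
      using s intK_eq[OF f(1)] intK_eq[OF g(1)] intK_eq[of \<S> "\<lambda>S. f S + g S" "a + b"] unfolding L1K_char by auto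
  qed
  have part3: "\<forall>f\<in>L1K \<S>. \<forall>c::real. (\<lambda>S. c * f S) \<in> L1K \<S> \<and> intK \<S> (\<lambda>S. c * f S) = c * intK \<S> f"
  proof (intro ballI allI)
    fix f c assume "f \<in> L1K \<S>"
    then obtain a where f: "sigmabar \<S> (\<lambda>S. ereal (f S)) = ereal a" "sigmabar \<S> (\<lambda>S. ereal (- f S)) = ereal (- a)"
      unfolding L1K_char by blast
    have s: "sigmabar \<S> (\<lambda>S. ereal (c * f S)) = ereal (c * a) \<and> sigmabar \<S> (\<lambda>S. ereal (- (c * f S))) = ereal (- (c * a))"
      by (rule L1K_cmult[OF L K f])
    show "(\<lambda>S. c * f S) \<in> L1K \<S> \<and> intK \<S> (\<lambda>S. c * f S) = c * intK \<S> f"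
      using s intK_eq[OF f(1)] intK_eq[of \<S> "\<lambda>S. c * f S" "c * a"] unfolding L1K_char by auto
  qed
  have part4: "\<forall>f. in_E \<S> f \<longrightarrow> f \<in> L1K \<S> \<and> intK \<S> f = Ifun \<S> f"
    using E_L1K[OF L K] by blast
  have part7: "\<forall>f\<in>L1K \<S>. (\<forall>S\<in>\<S>. f S \<ge> 0) \<longrightarrow> intK \<S> f \<ge> 0"
  proof (intro ballI impI)
    fix f assume "f \<in> L1K \<S>" and nn: "\<forall>S\<in>\<S>. f S \<ge> 0"
    then obtain a where f: "sigmabar \<S> (\<lambda>S. ereal (f S)) = ereal a"
      unfolding L1K_char by blast
    have "ereal 0 \<le> sigmabar \<S> (\<lambda>S. ereal (f S))"
      using sigmabar_mono[of \<S> "\<lambda>S. ereal 0" "\<lambda>S. ereal (f S)"] nn sigmabar_const[OF L K, of 0] by simp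
    then show "intK \<S> f \<ge> 0" using f intK_eq[OF f] by simp
  qed
  have part8: "\<forall>c::real. intK \<S> (\<lambda>S. c) = c"
    using intK_eq[OF sigmabar_const[OF L K]] by blast
  have part10: "\<forall>f (fs :: nat \<Rightarrow> traj \<Rightarrow> real). f \<in> L1K \<S> \<longrightarrow> (\<forall>n. fs n \<in> L1K \<S>) \<longrightarrow>
          (\<lambda>n. snorm \<S> (\<lambda>S. fs n S - f S)) \<longlonglongrightarrow> 0 \<longrightarrow>
          (\<lambda>n. intK \<S> (fs n)) \<longlonglongrightarrow> intK \<S> f"
  proof (intro allI impI)
    fix f and fs :: "nat \<Rightarrow> traj \<Rightarrow> real"
    assume fL: "f \<in> L1K \<S>" and fsL: "\<forall>n. fs n \<in> L1K \<S>" and lim: "(\<lambda>n. snorm \<S> (\<lambda>S. fs n S - f S)) \<longlonglongrightarrow> 0"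
    obtain a where f: "sigmabar \<S> (\<lambda>S. ereal (f S)) = ereal a"
      using fL unfolding L1K_char by blast
    have "\<forall>n. \<exists>b. sigmabar \<S> (\<lambda>S. ereal (fs n S)) = ereal b"
      using fsL unfolding L1K_char by blast
    then obtain b where b: "\<And>n. sigmabar \<S> (\<lambda>S. ereal (fs n S)) = ereal (b n)" by metis
    have "b \<longlonglongrightarrow> a" by (rule L1K_conv[OF f b lim])
    moreover have "(\<lambda>n. intK \<S> (fs n)) = b" using intK_eq[OF b] by (simp add: fun_eq_iff)
    ultimately show "(\<lambda>n. intK \<S> (fs n)) \<longlonglongrightarrow> intK \<S> f" using intK_eq[OF f] by simp
  qed
  have part11: "\<forall>f\<in>L1K \<S>. \<forall>g\<in>L1K \<S>. ae \<S> (\<lambda>S. f S \<ge> g S) \<longrightarrow> intK \<S> f = intK \<S> g \<longrightarrow>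
          ae \<S> (\<lambda>S. f S = g S)"
  proof (intro ballI impI)
    fix f g assume "f \<in> L1K \<S>" "g \<in> L1K \<S>" and ae: "ae \<S> (\<lambda>S. f S \<ge> g S)" and eq: "intK \<S> f = intK \<S> g"
    then obtain a b where f: "sigmabar \<S> (\<lambda>S. ereal (f S)) = ereal a" "sigmabar \<S> (\<lambda>S. ereal (- f S)) = ereal (- a)"
      and g: "sigmabar \<S> (\<lambda>S. ereal (g S)) = ereal b" "sigmabar \<S> (\<lambda>S. ereal (- g S)) = ereal (- b)"
      unfolding L1K_char by blast
    have ab: "a = b" using eq intK_eq[OF f(1)] intK_eq[OF g(1)] by simp
    have g': "sigmabar \<S> (\<lambda>S. ereal (- g S)) = ereal (- b)" "sigmabar \<S> (\<lambda>S. ereal (- (- g S))) = ereal (- (- b))"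
      using g by simp_all
    have "sigmabar \<S> (\<lambda>S. ereal (f S + - g S)) = ereal (a + - b)"
      using L1K_add[OF L K f g'] by blast
    then have h: "sigmabar \<S> (\<lambda>S. ereal (f S + - g S)) = 0" using ab by (simp add: zero_ereal_def)
    obtain A where A: "null_set \<S> A" "\<forall>S\<in>\<S> - A. f S \<ge> g S" using ae unfolding ae_def by blast
    have "null_set \<S> ({S\<in>\<S>. f S + - g S \<noteq> 0} \<union> A)"
      by (rule strict_pos[OF L K h A(1)]) (use A(2) in auto)
    moreover have "\<forall>S\<in>\<S> - ({S\<in>\<S>. f S + - g S \<noteq> 0} \<union> A). f S = g S" by auto
    ultimately show "ae \<S> (\<lambda>S. f S = g S)" unfolding ae_def by blast
  qed
  show ?thesis using part1 part2 part3 part4 part7 part8 part10 part11 by blast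
qed

end
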